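(* Let $n\ge1$, $m,m'\ge0$. The power symmetric polynomials $p_\pi$, where $\pi$ runs over all super multiset partitions over $[m]\cup[\overline{m'}]$ with at most $n$ parts, span the subring of $S_n$-invariants of $\mathbb{C}[X_{n\times m};\Theta_{n\times m'}]$.
   Context: $\mathbb{C}[X_{n\times m};\Theta_{n\times m'}]$ is the associative $\mathbb{C}$-algebra generated by $x_{rk}$ ($1\le r\le n$, $1\le k\le m$) and $\theta_{ri}$ ($1\le r\le n$, $1\le i\le m'$) with: the $x_{rk}$ commute with each other and with all $\theta_{si}$; $\theta_{ri}\theta_{sj}=-\theta_{sj}\theta_{ri}$ for $(r,i)\ne(s,j)$; $\theta_{ri}^2=0$. $S_n$ acts by algebra automorphisms via $\sigma(x_{rk})=x_{\sigma(r)k}$, $\sigma(\theta_{ri})=\theta_{\sigma(r)i}$. Multisets are over $\{1,\dots,m\}\cup\{\bar1,\dots,\overline{m'}\}$; entries $\bar j$ are barred. A super multiset partition is a multiset $\pi=\{\!\{S_1,\dots,S_\ell\}\!\}$ of non-empty multisets (parts) such that no barred entry occurs more than once in any part and every part containing an odd number of barred entries occurs at most once in $\pi$. For a multiset $S=\{\!\{1^{a_1},\dots,m^{a_m},\bar s_1,\dots,\bar s_k\}\!\}$ with $s_1<\dots<s_k$ distinct, the power sum generator is $p_S=\sum_{r=1}^n x_{r1}^{a_1}\cdots x_{rm}^{a_m}\theta_{rs_1}\cdots\theta_{rs_k}$, and $p_\pi=p_{S_1}p_{S_2}\cdots p_{S_\ell}$ (for some fixed ordering of the parts). *)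

theory Defs
  imports Complex_Main "HOL-Library.Multiset" "HOL-Combinatorics.Permutations"
begin

(* Entries of super multisets: Ub k is the unbarred entry k (1 <= k <= m),
   Bar j is the barred entry \bar j (1 <= j <= m'). *)
datatype entry = Ub nat | Bar nat

(* ---- The algebra C[X_{n x m}; Theta_{n x m'}] ----
   A basis monomial is a pair (a, A): a (r,k) is the exponent of x_{rk},
   A is the set of indices (r,i) of the theta's that occur, the theta's being
   multiplied in increasing lexicographic order of (r,i). *)
type_synonym mono = "((nat \<times> nat) \<Rightarrow> nat) \<times> (nat \<times> nat) set"
type_synonym elt = "mono \<Rightarrow> complex"

definition plt :: "nat \<times> nat \<Rightarrow> nat \<times> nat \<Rightarrow> bool" where
  "plt u v \<longleftrightarrow> fst u < fst v \<or> (fst u = fst v \<and> snd u < snd v)"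

definition valid_mono :: "nat \<Rightarrow> nat \<Rightarrow> nat \<Rightarrow> mono \<Rightarrow> bool" where
  "valid_mono n m m' \<mu> \<longleftrightarrow>
     (\<forall>r k. fst \<mu> (r, k) \<noteq> 0 \<longrightarrow> 1 \<le> r \<and> r \<le> n \<and> 1 \<le> k \<and> k \<le> m) \<and>
     snd \<mu> \<subseteq> {1..n} \<times> {1..m'}"

definition supp :: "elt \<Rightarrow> mono set" where
  "supp f = {\<mu>. f \<mu> \<noteq> 0}"

definition in_alg :: "nat \<Rightarrow> nat \<Rightarrow> nat \<Rightarrow> elt \<Rightarrow> bool" where
  "in_alg n m m' f \<longleftrightarrow> finite (supp f) \<and> (\<forall>\<mu>\<in>supp f. valid_mono n m m' \<mu>)"

(* theta_A * theta_B = (-1)^(inv_count A B) theta_{A \<union> B} if A, B disjoint, else 0 *)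
definition inv_count :: "(nat \<times> nat) set \<Rightarrow> (nat \<times> nat) set \<Rightarrow> nat" where
  "inv_count A B = card {(u, v). u \<in> A \<and> v \<in> B \<and> plt v u}"

definition mono_mult :: "mono \<Rightarrow> mono \<Rightarrow> mono" where
  "mono_mult \<nu> \<rho> = ((\<lambda>p. fst \<nu> p + fst \<rho> p), snd \<nu> \<union> snd \<rho>)"

definition mono_coef :: "mono \<Rightarrow> mono \<Rightarrow> complex" where
  "mono_coef \<nu> \<rho> = (if snd \<nu> \<inter> snd \<rho> = {} then (-1) ^ inv_count (snd \<nu>) (snd \<rho>) else 0)"

definition mult :: "elt \<Rightarrow> elt \<Rightarrow> elt" where
  "mult f g = (\<lambda>\<mu>. \<Sum>(\<nu>, \<rho>) \<in> supp f \<times> supp g.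
       if mono_mult \<nu> \<rho> = \<mu> then mono_coef \<nu> \<rho> * f \<nu> * g \<rho> else 0)"

definition one_elt :: elt where
  "one_elt = (\<lambda>\<mu>. if \<mu> = ((\<lambda>_. 0), {}) then 1 else 0)"

definition mono_act :: "(nat \<Rightarrow> nat) \<Rightarrow> mono \<Rightarrow> mono" where
  "mono_act \<sigma> \<mu> = ((\<lambda>(r, k). fst \<mu> (inv \<sigma> r, k)), (\<lambda>(r, i). (\<sigma> r, i)) ` snd \<mu>)"

(* sign from reordering theta_{sigma u_1} ... theta_{sigma u_k} into increasing order *)
definition act_sign :: "(nat \<Rightarrow> nat) \<Rightarrow> (nat \<times> nat) set \<Rightarrow> complex" where
  "act_sign \<sigma> A = (-1) ^ card {(u, v). u \<in> A \<and> v \<in> A \<and> plt u v \<and>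
                        plt (\<sigma> (fst v), snd v) (\<sigma> (fst u), snd u)}"

definition act :: "(nat \<Rightarrow> nat) \<Rightarrow> elt \<Rightarrow> elt" where
  "act \<sigma> f = (\<lambda>\<mu>'. \<Sum>\<mu> \<in> supp f. if mono_act \<sigma> \<mu> = \<mu>' then act_sign \<sigma> (snd \<mu>) * f \<mu> else 0)"

definition invariants :: "nat \<Rightarrow> nat \<Rightarrow> nat \<Rightarrow> elt set" where
  "invariants n m m' = {f. in_alg n m m' f \<and> (\<forall>\<sigma>. \<sigma> permutes {1..n} \<longrightarrow> act \<sigma> f = f)}"

definition cspan :: "elt set \<Rightarrow> elt set" where
  "cspan G = {f. \<exists>F c. finite F \<and> F \<subseteq> G \<and> f = (\<lambda>\<mu>. \<Sum>g\<in>F. c g * g \<mu>)}"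

definition allowed_entry :: "nat \<Rightarrow> nat \<Rightarrow> entry \<Rightarrow> bool" where
  "allowed_entry m m' e \<longleftrightarrow> (case e of Ub k \<Rightarrow> 1 \<le> k \<and> k \<le> m | Bar j \<Rightarrow> 1 \<le> j \<and> j \<le> m')"

definition nbar :: "entry multiset \<Rightarrow> nat" where
  "nbar S = size (filter_mset (\<lambda>e. \<exists>j. e = Bar j) S)"

definition super_mset_partition :: "nat \<Rightarrow> nat \<Rightarrow> entry multiset multiset \<Rightarrow> bool" where
  "super_mset_partition m m' \<pi> \<longleftrightarrow>
     (\<forall>S\<in>#\<pi>. S \<noteq> {#} \<and> (\<forall>e\<in>#S. allowed_entry m m' e)
              \<and> (\<forall>j. count S (Bar j) \<le> 1)
              \<and> (odd (nbar S) \<longrightarrow> count \<pi> S \<le> 1))"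

definition psum_mono :: "nat \<Rightarrow> entry multiset \<Rightarrow> mono" where
  "psum_mono r S = ((\<lambda>(r', k). if r' = r then count S (Ub k) else 0), {(r, j) | j. Bar j \<in># S})"

(* p_S = sum_{r=1}^n x_{r1}^{a_1} ... x_{rm}^{a_m} theta_{r s_1} ... theta_{r s_k}, s_1 < ... < s_k *)
definition psum :: "nat \<Rightarrow> entry multiset \<Rightarrow> elt" where
  "psum n S = (\<lambda>\<mu>. \<Sum>r\<in>{1..n}. if \<mu> = psum_mono r S then 1 else 0)"

fun psum_list :: "nat \<Rightarrow> entry multiset list \<Rightarrow> elt" where
  "psum_list n [] = one_elt"
| "psum_list n (S # L) = mult (psum n S) (psum_list n L)"

end

theory Submission
  imports Defs
begin

definition lin :: "'a set \<Rightarrow> ('a \<Rightarrow> mono) \<Rightarrow> ('a \<Rightarrow> complex) \<Rightarrow> elt" where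
  "lin I \<alpha> x = (\<lambda>\<mu>. \<Sum>a\<in>I. if \<alpha> a = \<mu> then x a else 0)"

lemma supp_lin: "supp (lin I \<alpha> x) \<subseteq> \<alpha> ` I"
proof
  fix \<mu> assume "\<mu> \<in> supp (lin I \<alpha> x)"
  then have h: "(\<Sum>a\<in>I. if \<alpha> a = \<mu> then x a else 0) \<noteq> 0" by (simp add: supp_def lin_def)
  obtain a where "a \<in> I" "(if \<alpha> a = \<mu> then x a else 0) \<noteq> 0" 
    by (rule sum.not_neutral_contains_not_neutral[OF h])
  then show "\<mu> \<in> \<alpha> ` I" by (auto split: if_splits)
qed

lemma finite_supp_lin: "finite I \<Longrightarrow> finite (supp (lin I \<alpha> x))"
  by (meson finite_imageI finite_subset supp_lin)

lemma sum_supp_ext: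
  assumes "finite U" "supp f \<subseteq> U"
  shows "(\<Sum>\<mu>\<in>supp f. G \<mu> * f \<mu>) = (\<Sum>\<mu>\<in>U. G \<mu> * f \<mu>)"
  by (rule sum.mono_neutral_left) (use assms in \<open>auto simp: supp_def\<close>)

lemma lin_sum:
  assumes "finite I"
  shows "(\<Sum>\<mu>\<in>supp (lin I \<alpha> x). G \<mu> * lin I \<alpha> x \<mu>) = (\<Sum>a\<in>I. G (\<alpha> a) * x a)"
proof -
  have "(\<Sum>\<mu>\<in>supp (lin I \<alpha> x). G \<mu> * lin I \<alpha> x \<mu>) = (\<Sum>\<mu>\<in>\<alpha>`I. G \<mu> * lin I \<alpha> x \<mu>)"
    by (rule sum_supp_ext[OF finite_imageI[OF assms] supp_lin])
  also have "\<dots> = (\<Sum>\<mu>\<in>\<alpha>`I. \<Sum>a\<in>I. if \<alpha> a = \<mu> then G \<mu> * x a else 0)"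
    by (simp add: lin_def sum_distrib_left if_distrib cong: if_cong)
  also have "\<dots> = (\<Sum>a\<in>I. \<Sum>\<mu>\<in>\<alpha>`I. if \<alpha> a = \<mu> then G \<mu> * x a else 0)"
    by (rule sum.swap)
  also have "\<dots> = (\<Sum>a\<in>I. G (\<alpha> a) * x a)"
    using assms by (intro sum.cong) (auto simp: sum.delta)
  finally show ?thesis .
qed

lemma mult_lin:
  assumes "finite I" "finite J"
  shows "mult (lin I \<alpha> x) (lin J \<beta> y) = lin (I \<times> J) (\<lambda>(a,b). mono_mult (\<alpha> a) (\<beta> b))
            (\<lambda>(a,b). mono_coef (\<alpha> a) (\<beta> b) * x a * y b)"
proof
  fix \<mu>
  let ?f = "lin I \<alpha> x" and ?g = "lin J \<beta> y"
  have "mult ?f ?g \<mu> = (\<Sum>\<nu>\<in>supp ?f. \<Sum>\<rho>\<in>supp ?g.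
          (if mono_mult \<nu> \<rho> = \<mu> then mono_coef \<nu> \<rho> * ?f \<nu> * ?g \<rho> else 0))"
    unfolding mult_def by (simp add: sum.cartesian_product)
  also have "\<dots> = (\<Sum>\<nu>\<in>supp ?f. \<Sum>\<rho>\<in>supp ?g.
          (if mono_mult \<nu> \<rho> = \<mu> then mono_coef \<nu> \<rho> * ?f \<nu> else 0) * ?g \<rho>)"
    by (intro sum.cong) auto
  also have "\<dots> = (\<Sum>\<nu>\<in>supp ?f. \<Sum>b\<in>J.
          (if mono_mult \<nu> (\<beta> b) = \<mu> then mono_coef \<nu> (\<beta> b) * ?f \<nu> else 0) * y b)"
    using assms by (intro sum.cong refl lin_sum)
  also have "\<dots> = (\<Sum>b\<in>J. \<Sum>\<nu>\<in>supp ?f.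
          (if mono_mult \<nu> (\<beta> b) = \<mu> then mono_coef \<nu> (\<beta> b) * y b else 0) * ?f \<nu>)"
    by (subst sum.swap) (intro sum.cong, auto)
  also have "\<dots> = (\<Sum>b\<in>J. \<Sum>a\<in>I.
          (if mono_mult (\<alpha> a) (\<beta> b) = \<mu> then mono_coef (\<alpha> a) (\<beta> b) * y b else 0) * x a)"
    using assms by (intro sum.cong refl lin_sum)
  also have "\<dots> = (\<Sum>(a,b)\<in>I \<times> J. if mono_mult (\<alpha> a) (\<beta> b) = \<mu>
          then mono_coef (\<alpha> a) (\<beta> b) * x a * y b else 0)"
    by (subst sum.swap) (simp add: sum.cartesian_product, intro sum.cong, auto)
  also have "\<dots> = lin (I \<times> J) (\<lambda>(a,b). mono_mult (\<alpha> a) (\<beta> b))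
            (\<lambda>(a,b). mono_coef (\<alpha> a) (\<beta> b) * x a * y b) \<mu>"
    unfolding lin_def by (intro sum.cong refl) (auto split: prod.splits)
  finally show "mult ?f ?g \<mu> = \<dots>" .
qed

lemma act_lin:
  assumes "finite I"
  shows "act \<sigma> (lin I \<alpha> x) = lin I (\<lambda>a. mono_act \<sigma> (\<alpha> a)) (\<lambda>a. act_sign \<sigma> (snd (\<alpha> a)) * x a)"
proof
  fix \<mu>'
  have "act \<sigma> (lin I \<alpha> x) \<mu>' = (\<Sum>\<mu>\<in>supp (lin I \<alpha> x).
         (if mono_act \<sigma> \<mu> = \<mu>' then act_sign \<sigma> (snd \<mu>) else 0) * lin I \<alpha> x \<mu>)"
    unfolding act_def by (intro sum.cong) auto
  also have "\<dots> = (\<Sum>a\<in>I. (if mono_act \<sigma> (\<alpha> a) = \<mu>' then act_sign \<sigma> (snd (\<alpha> a)) else 0) * x a)"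
    using assms by (rule lin_sum)
  also have "\<dots> = lin I (\<lambda>a. mono_act \<sigma> (\<alpha> a)) (\<lambda>a. act_sign \<sigma> (snd (\<alpha> a)) * x a) \<mu>'"
    unfolding lin_def by (intro sum.cong) auto
  finally show "act \<sigma> (lin I \<alpha> x) \<mu>' = \<dots>" .
qed

lemma lin_reindex: "inj_on h K \<Longrightarrow> lin (h ` K) \<alpha> x = lin K (\<lambda>k. \<alpha> (h k)) (\<lambda>k. x (h k))"
  unfolding lin_def by (simp add: sum.reindex)

lemma lin_cong: "(\<And>a. a \<in> I \<Longrightarrow> \<alpha> a = \<alpha>' a) \<Longrightarrow> (\<And>a. a \<in> I \<Longrightarrow> x a = x' a) \<Longrightarrow>
   lin I \<alpha> x = lin I \<alpha>' x'"
  unfolding lin_def by (intro ext sum.cong) auto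

fun MM :: "entry multiset list \<Rightarrow> nat list \<Rightarrow> mono" where
  "MM (S # L) (r # rs) = mono_mult (psum_mono r S) (MM L rs)"
| "MM _ _ = ((\<lambda>_. 0), {})"

fun CC :: "entry multiset list \<Rightarrow> nat list \<Rightarrow> complex" where
  "CC (S # L) (r # rs) = mono_coef (psum_mono r S) (MM L rs) * CC L rs"
| "CC _ _ = 1"

definition Rows :: "nat \<Rightarrow> nat \<Rightarrow> nat list set" where
  "Rows n l = {rs. length rs = l \<and> set rs \<subseteq> {1..n}}"

lemma finite_Rows: "finite (Rows n l)"
proof -
  have "Rows n l \<subseteq> {rs. set rs \<subseteq> {1..n} \<and> length rs = l}" by (auto simp: Rows_def)
  then show ?thesis using finite_lists_length_eq[of "{1..n}" l] by (auto intro: finite_subset)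
qed

lemma Rows_0: "Rows n 0 = {[]}" by (auto simp: Rows_def)

lemma Rows_Suc: "Rows n (Suc l) = (\<lambda>(r,rs). r # rs) ` ({1..n} \<times> Rows n l)"
proof -
  have "rs \<in> (\<lambda>(r,rs). r # rs) ` ({1..n} \<times> Rows n l)" if "rs \<in> Rows n (Suc l)" for rs
    using that by (cases rs) (auto simp: Rows_def image_iff)
  then show ?thesis by (auto simp: Rows_def)
qed

lemma psum_lin: "psum n S = lin {1..n} (\<lambda>r. psum_mono r S) (\<lambda>_. 1)"
  unfolding psum_def lin_def by (intro ext sum.cong refl) auto

lemma psum_list_lin: "psum_list n L = lin (Rows n (length L)) (MM L) (CC L)"
proof (induction L)
  case Nil
  show ?case
    by (auto simp: Rows_0 lin_def one_elt_def)
next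
  case (Cons S L)
  have "psum_list n (S # L) = mult (lin {1..n} (\<lambda>r. psum_mono r S) (\<lambda>_. 1)) (lin (Rows n (length L)) (MM L) (CC L))"
    by (simp only: psum_list.simps Cons psum_lin)
  also have "\<dots> = lin ({1..n} \<times> Rows n (length L)) (\<lambda>(a,b). mono_mult (psum_mono a S) (MM L b))
            (\<lambda>(a,b). mono_coef (psum_mono a S) (MM L b) * 1 * CC L b)"
    by (rule mult_lin) (simp_all add: finite_Rows)
  also have "\<dots> = lin ({1..n} \<times> Rows n (length L)) (\<lambda>(a,b). MM (S#L) (a#b)) (\<lambda>(a,b). CC (S#L) (a#b))"
    by (rule lin_cong) (simp_all split: prod.splits)
  also have "\<dots> = lin ((\<lambda>(r,rs). r # rs) ` ({1..n} \<times> Rows n (length L))) (MM (S#L)) (CC (S#L))"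
    by (subst lin_reindex) (auto simp: inj_on_def intro!: lin_cong)
  also have "\<dots> = lin (Rows n (length (S#L))) (MM (S#L)) (CC (S#L))"
    by (simp only: length_Cons Rows_Suc)
  finally show ?case .
qed

definition sh :: "(nat \<Rightarrow> nat) \<Rightarrow> nat \<times> nat \<Rightarrow> nat \<times> nat" where
  "sh \<sigma> u = (\<sigma> (fst u), snd u)"

lemma inj_sh: "inj \<sigma> \<Longrightarrow> inj (sh \<sigma>)"
  by (auto simp: inj_def sh_def prod_eq_iff)

lemma sh_lam: "(\<lambda>(r, i). (\<sigma> r, i)) = sh \<sigma>"
  by (auto simp: sh_def)

lemma snd_mono_act: "snd (mono_act \<sigma> \<mu>) = sh \<sigma> ` snd \<mu>"
  by (simp add: mono_act_def sh_lam)

lemma plt_irrefl: "\<not> plt u u" by (auto simp: plt_def)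
lemma plt_asym: "plt u v \<Longrightarrow> \<not> plt v u" by (auto simp: plt_def)
lemma plt_total: "u \<noteq> v \<Longrightarrow> plt u v \<or> plt v u" by (auto simp: plt_def prod_eq_iff)

definition revs :: "(nat \<Rightarrow> nat) \<Rightarrow> (nat \<times> nat) set \<Rightarrow> ((nat \<times> nat) \<times> (nat \<times> nat)) set" where
  "revs \<sigma> A = {(u, v). u \<in> A \<and> v \<in> A \<and> plt u v \<and> plt (sh \<sigma> v) (sh \<sigma> u)}"

lemma act_sign_revs: "act_sign \<sigma> A = (-1) ^ card (revs \<sigma> A)"
  by (simp add: act_sign_def revs_def sh_def)

lemma m1_pow_cong: "even (a + b) \<Longrightarrow> (-1::complex) ^ a = (-1) ^ b"
  by (metis (no_types, lifting) add.commute dvd_add_right_iff even_add neg_one_even_power neg_one_odd_power)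

lemma sign_G:
  assumes inj: "inj \<sigma>" and fA: "finite A" and fB: "finite B" and dis: "A \<inter> B = {}"
  shows "act_sign \<sigma> (A \<union> B) * (-1) ^ inv_count A B
       = (-1) ^ inv_count (sh \<sigma> ` A) (sh \<sigma> ` B) * act_sign \<sigma> A * act_sign \<sigma> B"
proof -
  let ?s = "sh \<sigma>"
  define X1 where "X1 = {(u,v). u \<in> A \<and> v \<in> B \<and> plt u v \<and> plt (?s v) (?s u)}"
  define X2 where "X2 = {(u,v). u \<in> B \<and> v \<in> A \<and> plt u v \<and> plt (?s v) (?s u)}"
  define Y where "Y = {(u,v). u \<in> A \<and> v \<in> B \<and> plt v u \<and> plt (?s u) (?s v)}"
  define Z where "Z = {(u,v). u \<in> A \<and> v \<in> B \<and> plt v u \<and> plt (?s v) (?s u)}"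
  have injs: "inj ?s" using inj by (rule inj_sh)
  have fAB: "finite (A \<times> B)" "finite (B \<times> A)" "finite (A \<times> A)" "finite (B \<times> B)"
    using fA fB by auto
  have fin: "finite X1" "finite X2" "finite Y" "finite Z" "finite (revs \<sigma> A)" "finite (revs \<sigma> B)"
    by (rule finite_subset[OF _ fAB(1)] finite_subset[OF _ fAB(2)] finite_subset[OF _ fAB(3)]
        finite_subset[OF _ fAB(4)]; auto simp: X1_def X2_def Y_def Z_def revs_def)+
  have "revs \<sigma> (A \<union> B) = revs \<sigma> A \<union> revs \<sigma> B \<union> X1 \<union> X2"
    by (auto simp: revs_def X1_def X2_def)
  moreover have "revs \<sigma> A \<inter> revs \<sigma> B = {}" "(revs \<sigma> A \<union> revs \<sigma> B) \<inter> X1 = {}"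
     "(revs \<sigma> A \<union> revs \<sigma> B \<union> X1) \<inter> X2 = {}"
    using dis by (auto simp: revs_def X1_def X2_def)
  ultimately have c1: "card (revs \<sigma> (A \<union> B)) = card (revs \<sigma> A) + card (revs \<sigma> B) + card X1 + card X2"
    using fin by (simp add: card_Un_disjoint)
  have "X2 = prod.swap ` Y" by (auto simp: X2_def Y_def image_iff)
  then have c2: "card X2 = card Y" by (simp add: card_image)
  have ne: "u \<noteq> v" if "u \<in> A" "v \<in> B" for u v using that dis by auto
  have "{(u,v). u \<in> A \<and> v \<in> B \<and> plt v u} = Z \<union> Y"
  proof -
    have "plt (?s v) (?s u) \<or> plt (?s u) (?s v)" if "u \<in> A" "v \<in> B" for u v
      using plt_total[of "?s v" "?s u"] ne[OF that] injs by (auto dest: injD)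
    then show ?thesis by (auto simp: Z_def Y_def)
  qed
  moreover have "Z \<inter> Y = {}" by (auto simp: Z_def Y_def dest: plt_asym)
  ultimately have c3: "inv_count A B = card Z + card Y"
    using fin by (simp add: inv_count_def card_Un_disjoint)
  have "{(u', v'). u' \<in> ?s ` A \<and> v' \<in> ?s ` B \<and> plt v' u'}
        = map_prod ?s ?s ` {(u,v). u \<in> A \<and> v \<in> B \<and> plt (?s v) (?s u)}"
    by auto
  moreover have "inj_on (map_prod ?s ?s) X" for X
    using injs by (auto simp: inj_on_def dest: injD)
  ultimately have "inv_count (?s ` A) (?s ` B) = card {(u,v). u \<in> A \<and> v \<in> B \<and> plt (?s v) (?s u)}"
    by (simp add: inv_count_def card_image)
  also have "{(u,v). u \<in> A \<and> v \<in> B \<and> plt (?s v) (?s u)} = Z \<union> X1"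
  proof -
    have "plt v u \<or> plt u v" if "u \<in> A" "v \<in> B" for u v
      using plt_total ne[OF that] by blast
    then show ?thesis by (auto simp: Z_def X1_def)
  qed
  also have "card (Z \<union> X1) = card Z + card X1"
    using fin by (intro card_Un_disjoint) (auto simp: Z_def X1_def dest: plt_asym)
  finally have c4: "inv_count (?s ` A) (?s ` B) = card Z + card X1" .
  have "act_sign \<sigma> (A \<union> B) * (-1) ^ inv_count A B
     = (-1::complex) ^ (card (revs \<sigma> (A \<union> B)) + inv_count A B)"
    by (simp add: act_sign_revs power_add)
  also have "\<dots> = (-1) ^ (inv_count (?s ` A) (?s ` B) + card (revs \<sigma> A) + card (revs \<sigma> B))"
    by (rule m1_pow_cong) (unfold c1 c2 c3 c4, presburger)
  also have "\<dots> = (-1) ^ inv_count (?s ` A) (?s ` B) * act_sign \<sigma> A * act_sign \<sigma> B"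
    by (simp add: act_sign_revs power_add)
  finally show ?thesis .
qed

lemma mono_act_mult: "mono_act \<sigma> (mono_mult a b) = mono_mult (mono_act \<sigma> a) (mono_act \<sigma> b)"
  by (auto simp: mono_act_def mono_mult_def image_Un fun_eq_iff split: prod.splits)

lemma mono_act_psum:
  assumes "bij \<sigma>"
  shows "mono_act \<sigma> (psum_mono r S) = psum_mono (\<sigma> r) S"
proof -
  have e: "inv \<sigma> r' = r \<longleftrightarrow> r' = \<sigma> r" for r'
    using assms by (metis bij_inv_eq_iff)
  show ?thesis
    unfolding mono_act_def psum_mono_def by (auto simp: e fun_eq_iff image_iff split: prod.splits)
qed

lemma mono_act_zero: "mono_act \<sigma> ((\<lambda>_. 0), {}) = ((\<lambda>_. 0), {})"
  by (auto simp: mono_act_def fun_eq_iff split: prod.splits)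

lemma MM_act: assumes "bij \<sigma>" shows "length L = length rs \<Longrightarrow> mono_act \<sigma> (MM L rs) = MM L (map \<sigma> rs)"
proof (induction L rs rule: list_induct2)
  case Nil then show ?case by (simp add: mono_act_zero)
next
  case (Cons S L r rs) then show ?case by (simp add: mono_act_mult mono_act_psum assms)
qed

lemma snd_psum_mono: "snd (psum_mono r S) = (\<lambda>j. (r, j)) ` {j. Bar j \<in># S}"
  by (auto simp: psum_mono_def)

lemma finite_bars: "finite {j. Bar j \<in># S}"
proof -
  have "{j. Bar j \<in># S} = Bar -` set_mset S" by auto
  then show ?thesis using finite_vimageI[of "set_mset S" Bar] by (simp add: inj_def)
qed

lemma finite_snd_psum: "finite (snd (psum_mono r S))"
  by (simp add: snd_psum_mono finite_bars)

lemma snd_mono_mult: "snd (mono_mult a b) = snd a \<union> snd b"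
  by (simp add: mono_mult_def)

lemma finite_snd_MM: "finite (snd (MM L rs))"
  by (induction L rs rule: MM.induct) (auto simp: snd_mono_mult finite_snd_psum)

lemma act_sign_row: "(\<And>u. u \<in> A \<Longrightarrow> fst u = r) \<Longrightarrow> act_sign \<sigma> A = 1"
proof -
  assume h: "\<And>u. u \<in> A \<Longrightarrow> fst u = r"
  have "revs \<sigma> A = {}"
    using h by (auto simp: revs_def sh_def plt_def)
  then show ?thesis by (simp add: act_sign_revs)
qed

lemma CC_act:
  assumes "bij \<sigma>"
  shows "length L = length rs \<Longrightarrow> act_sign \<sigma> (snd (MM L rs)) * CC L rs = CC L (map \<sigma> rs)"
proof (induction L rs rule: list_induct2)
  case Nil then show ?case by (simp add: act_sign_revs revs_def)
next
  case (Cons S L r rs)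
  let ?B = "psum_mono r S" and ?M = "MM L rs"
  have inj: "inj \<sigma>" using assms bij_is_inj by blast
  have bB: "snd (psum_mono (\<sigma> r) S) = sh \<sigma> ` snd ?B"
    by (metis mono_act_psum[OF assms] snd_mono_act)
  have bM: "snd (MM L (map \<sigma> rs)) = sh \<sigma> ` snd ?M"
    by (metis MM_act[OF assms Cons(1)] snd_mono_act)
  have row: "act_sign \<sigma> (snd ?B) = 1"
    by (rule act_sign_row[of _ r]) (auto simp: psum_mono_def)
  have IH: "CC L (map \<sigma> rs) = act_sign \<sigma> (snd ?M) * CC L rs" using Cons(2) by simp
  show ?case
  proof (cases "snd ?B \<inter> snd ?M = {}")
    case True
    then have d2: "sh \<sigma> ` snd ?B \<inter> sh \<sigma> ` snd ?M = {}"
      by (simp add: image_Int[symmetric, OF inj_sh[OF inj]])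
    have G: "act_sign \<sigma> (snd ?B \<union> snd ?M) * (-1) ^ inv_count (snd ?B) (snd ?M)
       = (-1) ^ inv_count (sh \<sigma> ` snd ?B) (sh \<sigma> ` snd ?M) * act_sign \<sigma> (snd ?B) * act_sign \<sigma> (snd ?M)"
      by (rule sign_G[OF inj finite_snd_psum finite_snd_MM True])
    show ?thesis
      using True d2 G by (simp add: mono_coef_def bB bM IH snd_mono_mult row mult.assoc)
  next
    case False
    then have d2: "sh \<sigma> ` snd ?B \<inter> sh \<sigma> ` snd ?M \<noteq> {}"
      by (simp add: image_Int[symmetric, OF inj_sh[OF inj]])
    show ?thesis
      using False d2 by (simp add: mono_coef_def bB bM)
  qed
qed

lemma Rows_map:
  assumes "\<sigma> permutes {1..n}"
  shows "map \<sigma> ` Rows n l = Rows n l"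
proof
  show "map \<sigma> ` Rows n l \<subseteq> Rows n l"
  proof
    fix xs assume "xs \<in> map \<sigma> ` Rows n l"
    then obtain rs where rs: "rs \<in> Rows n l" "xs = map \<sigma> rs" by blast
    then have "set xs \<subseteq> {1..n}" using permutes_in_image[OF assms] by (auto simp: Rows_def)
    then show "xs \<in> Rows n l" using rs by (simp add: Rows_def)
  qed
next
  have ip: "inv \<sigma> permutes {1..n}" using assms by (rule permutes_inv)
  show "Rows n l \<subseteq> map \<sigma> ` Rows n l"
  proof
    fix rs assume rs: "rs \<in> Rows n l"
    have "rs = map \<sigma> (map (inv \<sigma>) rs)"
      using permutes_inverses(1)[OF assms] by (simp add: map_idI)
    moreover have "map (inv \<sigma>) rs \<in> Rows n l"
      using rs permutes_in_image[OF ip] by (auto simp: Rows_def)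
    ultimately show "rs \<in> map \<sigma> ` Rows n l" by blast
  qed
qed

lemma psum_list_inv:
  assumes "\<sigma> permutes {1..n}"
  shows "act \<sigma> (psum_list n L) = psum_list n L"
proof -
  have b: "bij \<sigma>" using assms by (rule permutes_bij)
  have inj: "inj_on (map \<sigma>) X" for X using bij_is_inj[OF b] by (simp add: inj_on_def inj_map_eq_map)
  have "act \<sigma> (psum_list n L) = lin (Rows n (length L)) (\<lambda>rs. mono_act \<sigma> (MM L rs))
          (\<lambda>rs. act_sign \<sigma> (snd (MM L rs)) * CC L rs)"
    by (simp add: psum_list_lin act_lin finite_Rows)
  also have "\<dots> = lin (Rows n (length L)) (\<lambda>rs. MM L (map \<sigma> rs)) (\<lambda>rs. CC L (map \<sigma> rs))"
    by (rule lin_cong) (auto simp: Rows_def MM_act[OF b] CC_act[OF b])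
  also have "\<dots> = lin (map \<sigma> ` Rows n (length L)) (MM L) (CC L)"
    by (rule lin_reindex[symmetric, OF inj])
  also have "\<dots> = psum_list n L"
    by (simp add: Rows_map[OF assms] psum_list_lin)
  finally show ?thesis .
qed

lemma valid_zero: "valid_mono n m m' ((\<lambda>_. 0), {})"
  by (simp add: valid_mono_def)

lemma valid_mult: "valid_mono n m m' a \<Longrightarrow> valid_mono n m m' b \<Longrightarrow> valid_mono n m m' (mono_mult a b)"
  by (auto simp: valid_mono_def mono_mult_def)

lemma valid_psum: "r \<in> {1..n} \<Longrightarrow> (\<forall>e\<in>#S. allowed_entry m m' e) \<Longrightarrow> valid_mono n m m' (psum_mono r S)"
  unfolding valid_mono_def psum_mono_def
  by (auto simp: allowed_entry_def split: if_splits dest!: count_inI)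

lemma valid_MM: "set rs \<subseteq> {1..n} \<Longrightarrow> (\<forall>S\<in>set L. \<forall>e\<in>#S. allowed_entry m m' e) \<Longrightarrow> valid_mono n m m' (MM L rs)"
  by (induction L rs rule: MM.induct) (auto simp: valid_zero intro!: valid_mult valid_psum)

lemma in_alg_psum_list:
  assumes "\<forall>S\<in>set L. \<forall>e\<in>#S. allowed_entry m m' e"
  shows "in_alg n m m' (psum_list n L)"
  unfolding in_alg_def psum_list_lin
proof
  show "finite (supp (lin (Rows n (length L)) (MM L) (CC L)))" by (simp add: finite_supp_lin finite_Rows)
  show "\<forall>\<mu>\<in>supp (lin (Rows n (length L)) (MM L) (CC L)). valid_mono n m m' \<mu>"
  proof
    fix \<mu> assume "\<mu> \<in> supp (lin (Rows n (length L)) (MM L) (CC L))"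
    then obtain rs where "rs \<in> Rows n (length L)" "\<mu> = MM L rs"
      using supp_lin[of "Rows n (length L)" "MM L" "CC L"] by blast
    then show "valid_mono n m m' \<mu>" using assms by (auto simp: Rows_def intro!: valid_MM)
  qed
qed

lemma act_ext:
  assumes "finite U" "supp f \<subseteq> U"
  shows "act \<sigma> f \<mu>' = (\<Sum>\<mu>\<in>U. (if mono_act \<sigma> \<mu> = \<mu>' then act_sign \<sigma> (snd \<mu>) else 0) * f \<mu>)"
proof -
  have "act \<sigma> f \<mu>' = (\<Sum>\<mu>\<in>supp f. (if mono_act \<sigma> \<mu> = \<mu>' then act_sign \<sigma> (snd \<mu>) else 0) * f \<mu>)"
    unfolding act_def by (intro sum.cong) auto
  also have "\<dots> = (\<Sum>\<mu>\<in>U. (if mono_act \<sigma> \<mu> = \<mu>' then act_sign \<sigma> (snd \<mu>) else 0) * f \<mu>)"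
    by (rule sum_supp_ext[OF assms])
  finally show ?thesis .
qed

definition lincomb :: "elt set \<Rightarrow> (elt \<Rightarrow> complex) \<Rightarrow> elt" where
  "lincomb F c = (\<lambda>\<mu>. \<Sum>g\<in>F. c g * g \<mu>)"

lemma supp_lincomb: "supp (lincomb F c) \<subseteq> \<Union> (supp ` F)"
proof
  fix \<mu> assume "\<mu> \<in> supp (lincomb F c)"
  then have h: "(\<Sum>g\<in>F. c g * g \<mu>) \<noteq> 0" by (simp add: supp_def lincomb_def)
  obtain g where "g \<in> F" "c g * g \<mu> \<noteq> 0"
    by (rule sum.not_neutral_contains_not_neutral[OF h])
  then show "\<mu> \<in> \<Union> (supp ` F)" by (auto simp: supp_def)
qed

lemma act_lincomb:
  assumes "finite F" "\<forall>g\<in>F. finite (supp g)"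
  shows "act \<sigma> (lincomb F c) \<mu>' = (\<Sum>g\<in>F. c g * act \<sigma> g \<mu>')"
proof -
  let ?U = "\<Union> (supp ` F)"
  let ?w = "\<lambda>\<mu>. (if mono_act \<sigma> \<mu> = \<mu>' then act_sign \<sigma> (snd \<mu>) else 0)"
  have fU: "finite ?U" using assms by auto
  have "act \<sigma> (lincomb F c) \<mu>' = (\<Sum>\<mu>\<in>?U. ?w \<mu> * lincomb F c \<mu>)"
    by (rule act_ext[OF fU supp_lincomb])
  also have "\<dots> = (\<Sum>\<mu>\<in>?U. \<Sum>g\<in>F. c g * (?w \<mu> * g \<mu>))"
    unfolding lincomb_def sum_distrib_left by (intro sum.cong refl) (simp add: algebra_simps)
  also have "\<dots> = (\<Sum>g\<in>F. c g * (\<Sum>\<mu>\<in>?U. ?w \<mu> * g \<mu>))"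
    by (subst sum.swap) (simp add: sum_distrib_left)
  also have "\<dots> = (\<Sum>g\<in>F. c g * act \<sigma> g \<mu>')"
    using fU by (intro sum.cong refl) (auto intro!: act_ext[symmetric])
  finally show ?thesis .
qed

lemma lincomb_invariant:
  assumes "finite F" "F \<subseteq> invariants n m m'"
  shows "lincomb F c \<in> invariants n m m'"
proof -
  have fs: "\<forall>g\<in>F. finite (supp g)" using assms by (auto simp: invariants_def in_alg_def)
  have "finite (supp (lincomb F c))"
    using supp_lincomb[of F c] assms(1) fs by (meson finite_UN_I finite_subset)
  moreover have "valid_mono n m m' \<mu>" if h: "\<mu> \<in> supp (lincomb F c)" for \<mu>
  proof -
    obtain g where "g \<in> F" "\<mu> \<in> supp g" using h supp_lincomb[of F c] by blast
    then show ?thesis using assms(2) by (auto simp: invariants_def in_alg_def)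
  qed
  moreover have "act \<sigma> (lincomb F c) = lincomb F c" if "\<sigma> permutes {1..n}" for \<sigma>
  proof
    fix \<mu>'
    have "act \<sigma> (lincomb F c) \<mu>' = (\<Sum>g\<in>F. c g * act \<sigma> g \<mu>')"
      by (rule act_lincomb[OF assms(1) fs])
    also have "\<dots> = lincomb F c \<mu>'"
      unfolding lincomb_def using assms(2) that by (intro sum.cong refl) (auto simp: invariants_def)
    finally show "act \<sigma> (lincomb F c) \<mu>' = lincomb F c \<mu>'" .
  qed
  ultimately show ?thesis by (auto simp: invariants_def in_alg_def)
qed

lemma cspan_lincomb: "cspan G = {f. \<exists>F c. finite F \<and> F \<subseteq> G \<and> f = lincomb F c}"
  by (simp add: cspan_def lincomb_def)

lemma cspan_invariant: "G \<subseteq> invariants n m m' \<Longrightarrow> cspan G \<subseteq> invariants n m m'"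
  unfolding cspan_lincomb using lincomb_invariant by blast

lemma psum_list_invariant:
  assumes "\<forall>S\<in>set L. \<forall>e\<in>#S. allowed_entry m m' e"
  shows "psum_list n L \<in> invariants n m m'"
  using in_alg_psum_list[OF assms] psum_list_inv by (auto simp: invariants_def)

lemma gens_invariant:
  assumes "\<forall>\<pi>. mset (ord \<pi>) = \<pi>"
  shows "{psum_list n (ord \<pi>) | \<pi>. super_mset_partition m m' \<pi> \<and> size \<pi> \<le> n} \<subseteq> invariants n m m'"
proof
  fix f assume "f \<in> {psum_list n (ord \<pi>) | \<pi>. super_mset_partition m m' \<pi> \<and> size \<pi> \<le> n}"
  then obtain \<pi> where f: "f = psum_list n (ord \<pi>)" and p: "super_mset_partition m m' \<pi>" by blast
  have "set (ord \<pi>) = set_mset \<pi>" using assms by (metis set_mset_mset)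
  then have "\<forall>S\<in>set (ord \<pi>). \<forall>e\<in>#S. allowed_entry m m' e"
    using p by (simp add: super_mset_partition_def)
  then show "f \<in> invariants n m m'" using f psum_list_invariant by blast
qed

lemma cspan_zero: "(\<lambda>_. 0) \<in> cspan G"
  unfolding cspan_def by (rule CollectI, rule exI[of _ "{}"]) auto

lemma cspan_add:
  assumes "g \<in> cspan G" "p \<in> G"
  shows "(\<lambda>\<mu>. g \<mu> + a * p \<mu>) \<in> cspan G"
proof -
  obtain F c where F: "finite F" "F \<subseteq> G" "g = (\<lambda>\<mu>. \<Sum>x\<in>F. c x * x \<mu>)"
    using assms(1) by (auto simp: cspan_def)
  define c' where "c' x = (if x \<in> F then c x else 0) + (if x = p then a else 0)" for x
  have "(\<lambda>\<mu>. g \<mu> + a * p \<mu>) = (\<lambda>\<mu>. \<Sum>x\<in>insert p F. c' x * x \<mu>)"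
  proof
    fix \<mu>
    have "(\<Sum>x\<in>insert p F. c' x * x \<mu>) = (\<Sum>x\<in>insert p F. (if x \<in> F then c x * x \<mu> else 0))
         + (\<Sum>x\<in>insert p F. (if x = p then a * x \<mu> else 0))"
      unfolding sum.distrib[symmetric] by (intro sum.cong refl) (simp add: c'_def distrib_right)
    also have "(\<Sum>x\<in>insert p F. (if x \<in> F then c x * x \<mu> else 0)) = (\<Sum>x\<in>F. c x * x \<mu>)"
      using F(1) by (simp add: sum.If_cases Int_absorb1 subset_insertI)
    also have "(\<Sum>x\<in>insert p F. (if x = p then a * x \<mu> else 0)) = a * p \<mu>"
      using F(1) by (simp add: sum.delta')
    finally show "g \<mu> + a * p \<mu> = (\<Sum>x\<in>insert p F. c' x * x \<mu>)" using F(3) by simp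
  qed
  then show ?thesis using F assms(2) unfolding cspan_def by blast
qed

lemma invariants_add:
  assumes "f \<in> invariants n m m'" "p \<in> invariants n m m'"
  shows "(\<lambda>\<mu>. f \<mu> + a * p \<mu>) \<in> invariants n m m'"
proof (cases "f = p")
  case True
  have "lincomb {f} (\<lambda>_. 1 + a) \<in> invariants n m m'"
    using assms by (intro lincomb_invariant) auto
  moreover have "lincomb {f} (\<lambda>_. 1 + a) = (\<lambda>\<mu>. f \<mu> + a * p \<mu>)"
    using True by (auto simp: lincomb_def algebra_simps)
  ultimately show ?thesis by simp
next
  case False
  have "lincomb {f, p} (\<lambda>x. if x = f then 1 else a) \<in> invariants n m m'"
    using assms by (intro lincomb_invariant) auto
  moreover have "lincomb {f, p} (\<lambda>x. if x = f then 1 else a) = (\<lambda>\<mu>. f \<mu> + a * p \<mu>)"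
    using False by (auto simp: lincomb_def)
  ultimately show ?thesis by simp
qed

definition nzrow :: "mono \<Rightarrow> nat \<Rightarrow> bool" where
  "nzrow \<mu> r \<longleftrightarrow> (\<exists>k. fst \<mu> (r, k) \<noteq> 0) \<or> (\<exists>i. (r, i) \<in> snd \<mu>)"

definition Rw :: "mono \<Rightarrow> nat set" where "Rw \<mu> = {r. nzrow \<mu> r}"

definition rows :: "mono \<Rightarrow> nat" where "rows \<mu> = card (Rw \<mu>)"

definition bars :: "mono \<Rightarrow> nat \<Rightarrow> nat set" where "bars \<mu> r = {j. (r, j) \<in> snd \<mu>}"

definition content :: "nat \<Rightarrow> mono \<Rightarrow> nat \<Rightarrow> entry multiset" where
  "content m \<mu> r = (\<Sum>k\<in>{1..m}. replicate_mset (fst \<mu> (r, k)) (Ub k)) + mset_set (Bar ` bars \<mu> r)"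

definition part :: "nat \<Rightarrow> mono \<Rightarrow> entry multiset multiset" where
  "part m \<mu> = image_mset (content m \<mu>) (mset_set (Rw \<mu>))"

lemma Rw_valid: "valid_mono n m m' \<mu> \<Longrightarrow> Rw \<mu> \<subseteq> {1..n}"
  by (force simp: Rw_def nzrow_def valid_mono_def)

lemma finite_Rw: "valid_mono n m m' \<mu> \<Longrightarrow> finite (Rw \<mu>)"
  by (rule finite_subset[OF Rw_valid]) simp_all

lemma rows_le: assumes "valid_mono n m m' \<mu>" shows "rows \<mu> \<le> n"
proof -
  have "card (Rw \<mu>) \<le> card {1..n}" by (rule card_mono) (simp, rule Rw_valid[OF assms])
  then show ?thesis by (simp add: rows_def)
qed

lemma snd_valid: "valid_mono n m m' \<mu> \<Longrightarrow> snd \<mu> \<subseteq> {1..n} \<times> {1..m'}"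
  by (simp add: valid_mono_def)

lemma fst_valid: "valid_mono n m m' \<mu> \<Longrightarrow> fst \<mu> (r, k) \<noteq> 0 \<Longrightarrow> 1 \<le> r \<and> r \<le> n \<and> 1 \<le> k \<and> k \<le> m"
  by (simp add: valid_mono_def)

lemma finite_bars_mono: assumes "valid_mono n m m' \<mu>" shows "finite (bars \<mu> r)"
proof (rule finite_subset[of _ "{1..m'}"])
  show "bars \<mu> r \<subseteq> {1..m'}" using snd_valid[OF assms] by (auto simp: bars_def)
qed simp

lemma count_content_Ub:
  assumes "valid_mono n m m' \<mu>"
  shows "count (content m \<mu> r) (Ub k) = fst \<mu> (r, k)"
proof -
  have "count (mset_set (Bar ` bars \<mu> r)) (Ub k) = 0"
    by (auto simp: count_mset_set')
  moreover have "count (\<Sum>k\<in>{1..m}. replicate_mset (fst \<mu> (r, k)) (Ub k)) (Ub k) = fst \<mu> (r, k)"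
  proof -
    have "count (\<Sum>k\<in>{1..m}. replicate_mset (fst \<mu> (r, k)) (Ub k)) (Ub k)
        = (\<Sum>k'\<in>{1..m}. if k' = k then fst \<mu> (r, k) else 0)"
      by (simp add: count_sum count_replicate_mset)
    also have "\<dots> = (if k \<in> {1..m} then fst \<mu> (r, k) else 0)"
      by (simp add: sum.delta)
    also have "\<dots> = fst \<mu> (r, k)"
      using assms by (auto simp: valid_mono_def)
    finally show ?thesis .
  qed
  ultimately show ?thesis by (simp add: content_def)
qed

lemma count_content_Bar:
  assumes "valid_mono n m m' \<mu>"
  shows "count (content m \<mu> r) (Bar j) = (if (r, j) \<in> snd \<mu> then 1 else 0)"
proof -
  have f: "finite (Bar ` bars \<mu> r)" using finite_bars_mono[OF assms] by simp
  have "count (\<Sum>k\<in>{1..m}. replicate_mset (fst \<mu> (r, k)) (Ub k)) (Bar j) = 0"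
    by (simp add: count_sum count_replicate_mset)
  then show ?thesis using f by (simp add: content_def bars_def count_mset_set' image_iff)
qed

lemma mem_content_Bar:
  assumes "valid_mono n m m' \<mu>"
  shows "Bar j \<in># content m \<mu> r \<longleftrightarrow> (r, j) \<in> snd \<mu>"
proof -
  have c: "count (content m \<mu> r) (Bar j) = (if (r, j) \<in> snd \<mu> then 1 else 0)"
    by (rule count_content_Bar[OF assms])
  show ?thesis
  proof (cases "(r, j) \<in> snd \<mu>")
    case True then show ?thesis using c by (simp add: count_greater_zero_iff[symmetric])
  next
    case False then show ?thesis using c by (simp add: count_eq_zero_iff[symmetric])
  qed
qed

lemma content_eq_iff:
  assumes "valid_mono n m m' \<mu>"
  shows "content m \<mu> r1 = content m \<mu> r2 \<longleftrightarrow>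
         (\<forall>k. fst \<mu> (r1, k) = fst \<mu> (r2, k)) \<and> (\<forall>j. (r1, j) \<in> snd \<mu> \<longleftrightarrow> (r2, j) \<in> snd \<mu>)"
proof
  assume h: "content m \<mu> r1 = content m \<mu> r2"
  show "(\<forall>k. fst \<mu> (r1, k) = fst \<mu> (r2, k)) \<and> (\<forall>j. (r1, j) \<in> snd \<mu> \<longleftrightarrow> (r2, j) \<in> snd \<mu>)"
  proof (intro conjI allI)
    fix k show "fst \<mu> (r1, k) = fst \<mu> (r2, k)"
      using arg_cong[OF h, of "\<lambda>S. count S (Ub k)"] by (simp add: count_content_Ub[OF assms])
  next
    fix j show "(r1, j) \<in> snd \<mu> \<longleftrightarrow> (r2, j) \<in> snd \<mu>"
      using arg_cong[OF h, of "\<lambda>S. Bar j \<in># S"] by (simp add: mem_content_Bar[OF assms])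
  qed
next
  assume h: "(\<forall>k. fst \<mu> (r1, k) = fst \<mu> (r2, k)) \<and> (\<forall>j. (r1, j) \<in> snd \<mu> \<longleftrightarrow> (r2, j) \<in> snd \<mu>)"
  show "content m \<mu> r1 = content m \<mu> r2"
  proof (rule multiset_eqI)
    fix e show "count (content m \<mu> r1) e = count (content m \<mu> r2) e"
      using h by (cases e) (simp_all add: count_content_Ub[OF assms] count_content_Bar[OF assms])
  qed
qed

lemma content_nonempty:
  assumes "valid_mono n m m' \<mu>" "r \<in> Rw \<mu>"
  shows "content m \<mu> r \<noteq> {#}"
proof
  assume e: "content m \<mu> r = {#}"
  from assms(2) show False
  proof (unfold Rw_def nzrow_def, elim CollectE disjE exE)
    fix k assume "fst \<mu> (r, k) \<noteq> 0"
    then show False using e count_content_Ub[OF assms(1), of r k] by simp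
  next
    fix i assume "(r, i) \<in> snd \<mu>"
    then show False using e count_content_Bar[OF assms(1), of r i] by simp
  qed
qed

lemma content_allowed:
  assumes "valid_mono n m m' \<mu>" "e \<in># content m \<mu> r"
  shows "allowed_entry m m' e"
proof (cases e)
  case (Ub k)
  then have "fst \<mu> (r, k) \<noteq> 0" using assms count_content_Ub[OF assms(1), of r k]
    by (metis count_eq_zero_iff)
  then show ?thesis using assms(1) Ub by (auto simp: valid_mono_def allowed_entry_def)
next
  case (Bar j)
  then have "(r, j) \<in> snd \<mu>" using assms count_content_Bar[OF assms(1), of r j]
    by (metis count_eq_zero_iff)
  then show ?thesis using assms(1) Bar by (auto simp: valid_mono_def allowed_entry_def)
qed

lemma content_bar_le1: "valid_mono n m m' \<mu> \<Longrightarrow> count (content m \<mu> r) (Bar j) \<le> 1"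
  by (simp add: count_content_Bar)

lemma nbar_content:
  assumes "valid_mono n m m' \<mu>"
  shows "nbar (content m \<mu> r) = card (bars \<mu> r)"
proof -
  have f: "finite (bars \<mu> r)" by (rule finite_bars_mono[OF assms])
  have "filter_mset (\<lambda>e. \<exists>j. e = Bar j) (\<Sum>k\<in>{1..m}. replicate_mset (fst \<mu> (r, k)) (Ub k)) = {#}"
    by (rule multiset_eqI) (auto simp: count_sum count_replicate_mset count_filter_mset)
  moreover have "filter_mset (\<lambda>e. \<exists>j. e = Bar j) (mset_set (Bar ` bars \<mu> r)) = mset_set (Bar ` bars \<mu> r)"
    by (rule filter_mset_eq_conv[THEN iffD2]) (auto simp: f)
  ultimately show ?thesis
    using f by (simp add: nbar_def content_def card_image inj_on_def)
qed

lemma MM_map: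
  "distinct rs \<Longrightarrow> MM (map g rs) rs =
     ((\<lambda>(r, k). if r \<in> set rs then count (g r) (Ub k) else 0), {(r, j). r \<in> set rs \<and> Bar j \<in># g r})"
proof (induction rs)
  case Nil then show ?case by (auto simp: fun_eq_iff)
next
  case (Cons r rs)
  then show ?case
    by (auto simp: mono_mult_def psum_mono_def fun_eq_iff split: prod.splits)
qed

lemma MM_content:
  assumes "valid_mono n m m' \<mu>" "distinct rs" "set rs = Rw \<mu>"
  shows "MM (map (content m \<mu>) rs) rs = \<mu>"
proof -
  have 1: "(\<lambda>(r, k). if r \<in> set rs then count (content m \<mu> r) (Ub k) else 0) = fst \<mu>"
  proof
    fix p show "(\<lambda>(r, k). if r \<in> set rs then count (content m \<mu> r) (Ub k) else 0) p = fst \<mu> p"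
      using assms by (cases p) (auto simp: count_content_Ub Rw_def nzrow_def)
  qed
  have 2: "{(r, j). r \<in> set rs \<and> Bar j \<in># content m \<mu> r} = snd \<mu>"
    using assms by (auto simp: Rw_def nzrow_def mem_content_Bar[OF assms(1)])
  show ?thesis using assms(2) by (simp add: MM_map 1 2)
qed

lemma Rw_MM: "nzrow (MM L rs) r \<Longrightarrow> r \<in> set rs"
  by (induction L rs rule: MM.induct)
     (auto simp: nzrow_def mono_mult_def psum_mono_def split: if_splits)

lemma rows_MM:
  assumes "rs \<in> Rows n l"
  shows "rows (MM L rs) \<le> l" "rows (MM L rs) = l \<Longrightarrow> distinct rs"
proof -
  have s: "Rw (MM L rs) \<subseteq> set rs" using Rw_MM by (auto simp: Rw_def)
  have "rows (MM L rs) \<le> card (set rs)" unfolding rows_def by (rule card_mono[OF _ s]) simp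
  moreover have "card (set rs) \<le> l" using assms card_length by (auto simp: Rows_def)
  ultimately show "rows (MM L rs) \<le> l" by simp
  assume "rows (MM L rs) = l"
  then have "card (set rs) = length rs" using \<open>rows (MM L rs) \<le> card (set rs)\<close> \<open>card (set rs) \<le> l\<close> assms
    by (simp add: Rows_def)
  then show "distinct rs" by (rule card_distinct)
qed

lemma snd_MM_rows: "u \<in> snd (MM L rs) \<Longrightarrow> fst u \<in> set rs"
  by (induction L rs rule: MM.induct) (auto simp: mono_mult_def psum_mono_def)

lemma CC_nz: "length L = length rs \<Longrightarrow> distinct rs \<Longrightarrow> CC L rs \<noteq> 0"
proof (induction L rs rule: list_induct2)
  case Nil then show ?case by simp
next
  case (Cons S L r rs)
  have "snd (psum_mono r S) \<inter> snd (MM L rs) = {}"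
    using Cons(3) snd_MM_rows[of _ L rs] by (auto simp: psum_mono_def)
  then show ?case using Cons by (simp add: mono_coef_def)
qed

lemma list_of_mset_image:
  "finite R \<Longrightarrow> mset L = image_mset g (mset_set R) \<Longrightarrow> \<exists>rs. distinct rs \<and> set rs = R \<and> map g rs = L"
proof (induction L arbitrary: R)
  case Nil
  then have "R = {}" by (simp add: mset_set_empty_iff)
  then show ?case by (auto intro!: exI[of _ "[]"])
next
  case (Cons S L)
  have "S \<in># image_mset g (mset_set R)" using Cons(3) by (metis list.set_intros(1) set_mset_mset)
  then obtain r where r: "r \<in> R" "g r = S" using Cons(2) by auto
  have "mset_set R = add_mset r (mset_set (R - {r}))" using Cons(2) r(1) by (rule mset_set.remove)
  then have "mset L = image_mset g (mset_set (R - {r}))" using Cons(3) r(2) by simp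
  then obtain rs where rs: "distinct rs" "set rs = R - {r}" "map g rs = L"
    using Cons(1)[of "R - {r}"] Cons(2) by auto
  show ?case using rs r by (intro exI[of _ "r # rs"]) auto
qed

lemma perm_exists:
  "length xs = length ys \<Longrightarrow> distinct xs \<Longrightarrow> distinct ys \<Longrightarrow> set xs \<subseteq> S \<Longrightarrow> set ys \<subseteq> S \<Longrightarrow>
   \<exists>\<sigma>. \<sigma> permutes S \<and> map \<sigma> xs = ys"
proof (induction xs ys rule: list_induct2)
  case Nil then show ?case using permutes_id[of S] by (intro exI[of _ id]) (simp add: id_def)
next
  case (Cons x xs y ys)
  then obtain \<sigma>' where s': "\<sigma>' permutes S" "map \<sigma>' xs = ys" by auto
  define \<sigma> where "\<sigma> = Transposition.transpose y (\<sigma>' x) \<circ> \<sigma>'"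
  have xS: "\<sigma>' x \<in> S" using Cons(5) permutes_in_image[OF s'(1)] by auto
  have p: "\<sigma> permutes S" unfolding \<sigma>_def
    using Cons(6) xS by (intro permutes_compose[OF s'(1)] permutes_swap_id) auto
  have "\<sigma> z = \<sigma>' z" if "z \<in> set xs" for z
  proof -
    have "\<sigma>' z \<in> set ys" using that s'(2) by auto
    then have "\<sigma>' z \<noteq> y" using Cons(4) by auto
    moreover have "\<sigma>' z \<noteq> \<sigma>' x" using that Cons(3) permutes_inj[OF s'(1)] by (auto dest: injD)
    ultimately show ?thesis by (simp add: \<sigma>_def transpose_apply_other)
  qed
  then have "map \<sigma> xs = ys" using s'(2) by (metis map_eq_conv)
  moreover have "\<sigma> x = y" by (simp add: \<sigma>_def)
  ultimately show ?case using p by auto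
qed

definition bA :: "(nat \<times> nat) set \<Rightarrow> nat \<Rightarrow> nat" where "bA A r = card {j. (r, j) \<in> A}"

definition RP :: "(nat \<Rightarrow> nat) \<Rightarrow> (nat \<times> nat) set \<Rightarrow> (nat \<times> nat) set" where
  "RP \<sigma> A = {(r, t). r \<in> fst ` A \<and> t \<in> fst ` A \<and> r < t \<and> \<sigma> t < \<sigma> r}"

lemma revs_eq:
  assumes "inj \<sigma>"
  shows "revs \<sigma> A = {(u, v). u \<in> A \<and> v \<in> A \<and> fst u < fst v \<and> \<sigma> (fst v) < \<sigma> (fst u)}"
proof -
  have "plt u v \<and> plt (sh \<sigma> v) (sh \<sigma> u) \<longleftrightarrow> fst u < fst v \<and> \<sigma> (fst v) < \<sigma> (fst u)" for u v
  proof
    assume h: "plt u v \<and> plt (sh \<sigma> v) (sh \<sigma> u)"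
    show "fst u < fst v \<and> \<sigma> (fst v) < \<sigma> (fst u)"
    proof (cases "fst u = fst v")
      case True then show ?thesis using h by (auto simp: plt_def sh_def)
    next
      case False
      then have "\<sigma> (fst u) \<noteq> \<sigma> (fst v)" using assms by (auto dest: injD)
      then show ?thesis using h False by (auto simp: plt_def sh_def)
    qed
  next
    assume "fst u < fst v \<and> \<sigma> (fst v) < \<sigma> (fst u)"
    then show "plt u v \<and> plt (sh \<sigma> v) (sh \<sigma> u)" by (auto simp: plt_def sh_def)
  qed
  then show ?thesis by (auto simp: revs_def)
qed

lemma card_row: "finite A \<Longrightarrow> card {u \<in> A. fst u = r} = bA A r"
proof -
  assume f: "finite A"
  have "{u \<in> A. fst u = r} = (\<lambda>j. (r, j)) ` {j. (r, j) \<in> A}" by force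
  moreover have "card ((\<lambda>j. (r, j)) ` {j. (r, j) \<in> A}) = card {j. (r, j) \<in> A}"
    by (rule card_image) (auto simp: inj_on_def)
  ultimately show ?thesis by (simp add: bA_def)
qed

lemma card_revs:
  assumes "inj \<sigma>" "finite A"
  shows "card (revs \<sigma> A) = (\<Sum>p\<in>RP \<sigma> A. bA A (fst p) * bA A (snd p))"
proof -
  define R where "R r = {u \<in> A. fst u = r}" for r
  have eq: "revs \<sigma> A = (\<Union>p\<in>RP \<sigma> A. R (fst p) \<times> R (snd p))"
  proof (rule set_eqI, rule iffI)
    fix w assume "w \<in> revs \<sigma> A"
    then obtain u v where w: "w = (u, v)" "u \<in> A" "v \<in> A" "fst u < fst v" "\<sigma> (fst v) < \<sigma> (fst u)"
      by (auto simp: revs_eq[OF assms(1)])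
    have "(fst u, fst v) \<in> RP \<sigma> A" using w by (auto simp: RP_def)
    moreover have "w \<in> R (fst u) \<times> R (fst v)" using w by (auto simp: R_def)
    ultimately show "w \<in> (\<Union>p\<in>RP \<sigma> A. R (fst p) \<times> R (snd p))"
      by (intro UN_I[of "(fst u, fst v)"]) simp_all
  next
    fix w assume "w \<in> (\<Union>p\<in>RP \<sigma> A. R (fst p) \<times> R (snd p))"
    then show "w \<in> revs \<sigma> A" by (auto simp: revs_eq[OF assms(1)] RP_def R_def)
  qed
  have fRP: "finite (RP \<sigma> A)"
    by (rule finite_subset[of _ "fst ` A \<times> fst ` A"]) (auto simp: RP_def assms(2))
  have fR: "finite (R r)" for r using assms(2) by (simp add: R_def)
  have "card (revs \<sigma> A) = (\<Sum>p\<in>RP \<sigma> A. card (R (fst p) \<times> R (snd p)))"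
    unfolding eq
    by (rule card_UN_disjoint[OF fRP]) (auto simp: R_def assms(2))
  also have "\<dots> = (\<Sum>p\<in>RP \<sigma> A. bA A (fst p) * bA A (snd p))"
    by (intro sum.cong refl) (simp add: card_cartesian_product R_def card_row assms(2))
  finally show ?thesis .
qed

lemma act_sign_even: "inj \<sigma> \<Longrightarrow> finite A \<Longrightarrow> (\<And>p. p \<in> RP \<sigma> A \<Longrightarrow> even (bA A (fst p) * bA A (snd p)))
   \<Longrightarrow> act_sign \<sigma> A = 1"
  by (simp add: act_sign_revs card_revs dvd_sum)

lemma stab_facts:
  assumes "bij \<sigma>" "mono_act \<sigma> \<mu> = \<mu>"
  shows "fst \<mu> (\<sigma> r, k) = fst \<mu> (r, k)" "(\<sigma> r, j) \<in> snd \<mu> \<longleftrightarrow> (r, j) \<in> snd \<mu>"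
proof -
  have "fst (mono_act \<sigma> \<mu>) (\<sigma> r, k) = fst \<mu> (r, k)"
    using assms(1) by (simp add: mono_act_def inv_f_f bij_is_inj)
  then show "fst \<mu> (\<sigma> r, k) = fst \<mu> (r, k)" using assms(2) by simp
  have "snd \<mu> = sh \<sigma> ` snd \<mu>" using assms(2) snd_mono_act by metis
  moreover have "(\<sigma> r, j) \<in> sh \<sigma> ` snd \<mu> \<longleftrightarrow> (r, j) \<in> snd \<mu>"
  proof
    assume "(\<sigma> r, j) \<in> sh \<sigma> ` snd \<mu>"
    then obtain u where "u \<in> snd \<mu>" "sh \<sigma> u = (\<sigma> r, j)" by (metis imageE)
    then show "(r, j) \<in> snd \<mu>" using bij_is_inj[OF assms(1)]
      by (cases u) (auto simp: sh_def dest: injD)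
  next
    assume "(r, j) \<in> snd \<mu>"
    then show "(\<sigma> r, j) \<in> sh \<sigma> ` snd \<mu>" by (force simp: sh_def)
  qed
  ultimately show "(\<sigma> r, j) \<in> snd \<mu> \<longleftrightarrow> (r, j) \<in> snd \<mu>" by simp
qed

lemma bA_bars: "bA (snd \<mu>) r = card (bars \<mu> r)"
  by (simp add: bA_def bars_def)

lemma stab_sign:
  assumes v: "valid_mono n m m' \<mu>" and p: "\<sigma> permutes {1..n}" and st: "mono_act \<sigma> \<mu> = \<mu>"
    and uniq: "\<And>r1 r2. r1 \<in> Rw \<mu> \<Longrightarrow> r2 \<in> Rw \<mu> \<Longrightarrow> r1 \<noteq> r2 \<Longrightarrow> content m \<mu> r1 = content m \<mu> r2
               \<Longrightarrow> even (card (bars \<mu> r1))"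
  shows "act_sign \<sigma> (snd \<mu>) = 1"
proof -
  have b: "bij \<sigma>" using p by (rule permutes_bij)
  have fA: "finite (snd \<mu>)" using snd_valid[OF v] by (rule finite_subset) simp
  have fix_odd: "\<sigma> r = r" if "r \<in> fst ` snd \<mu>" "odd (card (bars \<mu> r))" for r
  proof (rule ccontr)
    assume ne: "\<sigma> r \<noteq> r"
    have "r \<in> Rw \<mu>" using that(1) by (force simp: Rw_def nzrow_def)
    moreover have "\<sigma> r \<in> Rw \<mu>" using that(1) stab_facts(2)[OF b st] by (force simp: Rw_def nzrow_def)
    moreover have "content m \<mu> (\<sigma> r) = content m \<mu> r"
      using stab_facts[OF b st] by (simp add: content_eq_iff[OF v])
    moreover have "card (bars \<mu> (\<sigma> r)) = card (bars \<mu> r)"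
      using stab_facts(2)[OF b st] by (simp add: bars_def)
    ultimately show False using uniq[of "\<sigma> r" r] ne that(2) by auto
  qed
  show ?thesis
  proof (rule act_sign_even[OF bij_is_inj[OF b] fA])
    fix p assume pr: "p \<in> RP \<sigma> (snd \<mu>)"
    show "even (bA (snd \<mu>) (fst p) * bA (snd \<mu>) (snd p))"
    proof (rule ccontr)
      assume "odd (bA (snd \<mu>) (fst p) * bA (snd \<mu>) (snd p))"
      then have o: "odd (card (bars \<mu> (fst p)))" "odd (card (bars \<mu> (snd p)))" by (auto simp: bA_bars)
      obtain r t where rt: "p = (r, t)" "r \<in> fst ` snd \<mu>" "t \<in> fst ` snd \<mu>"
        using pr unfolding RP_def by blast
      have "fst p \<in> fst ` snd \<mu>" "snd p \<in> fst ` snd \<mu>" using rt by simp_all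
      then have "\<sigma> (fst p) = fst p" "\<sigma> (snd p) = snd p"
        using o fix_odd by auto
      then show False using pr by (auto simp: RP_def)
    qed
  qed
qed

lemma mono_act_inv:
  assumes "bij \<sigma>"
  shows "mono_act (inv \<sigma>) (mono_act \<sigma> \<mu>) = \<mu>"
proof -
  have i: "inv (inv \<sigma>) = \<sigma>" using assms by (rule inv_inv_eq)
  have f: "inv \<sigma> (\<sigma> r) = r" for r using assms by (simp add: inv_f_f bij_is_inj)
  have "fst (mono_act (inv \<sigma>) (mono_act \<sigma> \<mu>)) = fst \<mu>"
    by (auto simp: mono_act_def i f fun_eq_iff)
  moreover have "snd (mono_act (inv \<sigma>) (mono_act \<sigma> \<mu>)) = snd \<mu>"
    by (simp add: snd_mono_act image_image sh_def f)
  ultimately show ?thesis by (simp add: prod_eq_iff)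
qed

lemma inj_mono_act: "bij \<sigma> \<Longrightarrow> inj (mono_act \<sigma>)"
  by (metis injI mono_act_inv)

lemma inv_value:
  assumes "finite (supp h)" "act \<sigma> h = h" "bij \<sigma>"
  shows "h (mono_act \<sigma> \<mu>) = act_sign \<sigma> (snd \<mu>) * h \<mu>"
proof -
  have "h (mono_act \<sigma> \<mu>) = act \<sigma> h (mono_act \<sigma> \<mu>)" using assms(2) by simp
  also have "\<dots> = (\<Sum>\<nu>\<in>supp h. if \<nu> = \<mu> then act_sign \<sigma> (snd \<nu>) * h \<nu> else 0)"
    unfolding act_def using inj_mono_act[OF assms(3)] by (intro sum.cong refl) (auto dest: injD)
  also have "\<dots> = act_sign \<sigma> (snd \<mu>) * h \<mu>"
    using assms(1) by (simp add: sum.delta' supp_def)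
  finally show ?thesis .
qed

lemma transp_facts:
  assumes "\<forall>k. fst \<mu> (r1, k) = fst \<mu> (r2, k)" "\<forall>j. (r1, j) \<in> snd \<mu> \<longleftrightarrow> (r2, j) \<in> snd \<mu>"
  shows "fst \<mu> (Transposition.transpose r1 r2 r, k) = fst \<mu> (r, k)"
    "(Transposition.transpose r1 r2 r, j) \<in> snd \<mu> \<longleftrightarrow> (r, j) \<in> snd \<mu>"
  using assms by (auto simp: transpose_def)

lemma transp_stab:
  assumes "\<forall>k. fst \<mu> (r1, k) = fst \<mu> (r2, k)" "\<forall>j. (r1, j) \<in> snd \<mu> \<longleftrightarrow> (r2, j) \<in> snd \<mu>"
  shows "mono_act (Transposition.transpose r1 r2) \<mu> = \<mu>"
proof -
  let ?t = "Transposition.transpose r1 r2"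
  have "fst (mono_act ?t \<mu>) = fst \<mu>"
    by (auto simp: mono_act_def inv_transpose_eq transp_facts[OF assms] fun_eq_iff)
  moreover have "sh ?t ` snd \<mu> = snd \<mu>"
  proof
    show "sh ?t ` snd \<mu> \<subseteq> snd \<mu>" using transp_facts(2)[OF assms] by (auto simp: sh_def)
    show "snd \<mu> \<subseteq> sh ?t ` snd \<mu>"
    proof
      fix u assume u: "u \<in> snd \<mu>"
      have "u = sh ?t (?t (fst u), snd u)" by (simp add: sh_def)
      moreover have "(?t (fst u), snd u) \<in> snd \<mu>" using u transp_facts(2)[OF assms, of "fst u" "snd u"] by simp
      ultimately show "u \<in> sh ?t ` snd \<mu>" by blast
    qed
  qed
  ultimately show ?thesis by (simp add: prod_eq_iff snd_mono_act)
qed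

lemma transp_sign:
  assumes "r1 < r2" "\<forall>j. (r1, j) \<in> A \<longleftrightarrow> (r2, j) \<in> A" "odd (bA A r1)" "finite A"
  shows "act_sign (Transposition.transpose r1 r2) A = -1"
proof -
  let ?t = "Transposition.transpose r1 r2"
  define s where "s = bA A r1"
  have s2: "bA A r2 = s" using assms(2) by (simp add: s_def bA_def)
  have "{j. (r1, j) \<in> A} \<noteq> {}"
  proof
    assume "{j. (r1, j) \<in> A} = {}"
    then have "bA A r1 = 0" by (simp add: bA_def)
    then show False using assms(3) by simp
  qed
  then have r1A: "r1 \<in> fst ` A" by force
  have "{j. (r2, j) \<in> A} \<noteq> {}"
  proof
    assume "{j. (r2, j) \<in> A} = {}"
    then have "bA A r2 = 0" by (simp add: bA_def)
    then show False using assms(3) s2 by (simp add: s_def)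
  qed
  then have r2A: "r2 \<in> fst ` A" by force
  define M where "M = {t \<in> fst ` A. r1 < t \<and> t < r2}"
  have fM: "finite M" using assms(4) by (simp add: M_def)
  have key: "r < t \<Longrightarrow> ?t t < ?t r \<longleftrightarrow> (r = r1 \<and> t = r2) \<or> (r = r1 \<and> r1 < t \<and> t < r2) \<or> (t = r2 \<and> r1 < r \<and> r < r2)" for r t
    using assms(1) by (auto simp: transpose_def)
  have RPe: "RP ?t A = insert (r1, r2) ((\<lambda>t. (r1, t)) ` M \<union> (\<lambda>t. (t, r2)) ` M)"
  proof (rule set_eqI)
    fix p show "p \<in> RP ?t A \<longleftrightarrow> p \<in> insert (r1, r2) ((\<lambda>t. (r1, t)) ` M \<union> (\<lambda>t. (t, r2)) ` M)"
    proof (cases p)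
      case (Pair r t)
      show ?thesis
      proof
        assume "p \<in> RP ?t A"
        then have h: "r \<in> fst ` A" "t \<in> fst ` A" "r < t" "?t t < ?t r" using Pair by (auto simp: RP_def)
        then show "p \<in> insert (r1, r2) ((\<lambda>t. (r1, t)) ` M \<union> (\<lambda>t. (t, r2)) ` M)"
          using key[OF h(3)] Pair by (auto simp: M_def)
      next
        assume h: "p \<in> insert (r1, r2) ((\<lambda>t. (r1, t)) ` M \<union> (\<lambda>t. (t, r2)) ` M)"
        have "r \<in> fst ` A \<and> t \<in> fst ` A \<and> r < t" using h Pair r1A r2A assms(1) by (auto simp: M_def)
        moreover have "?t t < ?t r" using h Pair key[of r t] assms(1) by (auto simp: M_def)
        ultimately show "p \<in> RP ?t A" using Pair by (simp add: RP_def)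
      qed
    qed
  qed
  let ?F = "\<lambda>p. bA A (fst p) * bA A (snd p)"
  have d1: "(r1, r2) \<notin> (\<lambda>t. (r1, t)) ` M \<union> (\<lambda>t. (t, r2)) ` M" by (auto simp: M_def)
  have d2: "(\<lambda>t. (r1, t)) ` M \<inter> (\<lambda>t. (t, r2)) ` M = {}" by (auto simp: M_def)
  have "card (revs ?t A) = (\<Sum>p\<in>RP ?t A. ?F p)"
    by (rule card_revs[OF permutes_inj[OF permutes_swap_id[of r1 UNIV r2]] assms(4)]) simp_all
  also have "\<dots> = ?F (r1, r2) + (\<Sum>p\<in>(\<lambda>t. (r1, t)) ` M. ?F p) + (\<Sum>p\<in>(\<lambda>t. (t, r2)) ` M. ?F p)"
    using fM d1 d2 by (simp add: RPe sum.union_disjoint)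
  also have "(\<Sum>p\<in>(\<lambda>t. (r1, t)) ` M. ?F p) = (\<Sum>t\<in>M. s * bA A t)"
    by (subst sum.reindex) (auto simp: inj_on_def s_def)
  also have "(\<Sum>p\<in>(\<lambda>t. (t, r2)) ` M. ?F p) = (\<Sum>t\<in>M. s * bA A t)"
    by (subst sum.reindex) (auto simp: inj_on_def s2 mult.commute)
  finally have "card (revs ?t A) = s * s + 2 * (\<Sum>t\<in>M. s * bA A t)" by (simp add: s_def s2)
  moreover have "odd s" using assms(3) by (simp add: s_def)
  ultimately have "odd (card (revs ?t A))" by simp
  then show ?thesis by (simp add: act_sign_revs)
qed

definition gens :: "nat \<Rightarrow> nat \<Rightarrow> nat \<Rightarrow> (entry multiset multiset \<Rightarrow> entry multiset list) \<Rightarrow> elt set" where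
  "gens n m m' ord = {psum_list n (ord \<pi>) | \<pi>. super_mset_partition m m' \<pi> \<and> size \<pi> \<le> n}"

lemma inv_valid: "f \<in> invariants n m m' \<Longrightarrow> \<mu> \<in> supp f \<Longrightarrow> valid_mono n m m' \<mu>"
  by (simp add: invariants_def in_alg_def)

lemma inv_finite: "f \<in> invariants n m m' \<Longrightarrow> finite (supp f)"
  by (simp add: invariants_def in_alg_def)

lemma uniq_core:
  assumes f: "f \<in> invariants n m m'" and mu: "\<mu> \<in> supp f"
    and r: "r1 \<in> Rw \<mu>" "r2 \<in> Rw \<mu>" "r1 < r2" "content m \<mu> r1 = content m \<mu> r2"
    and o: "odd (card (bars \<mu> r1))"
  shows False
proof -
  have v: "valid_mono n m m' \<mu>" by (rule inv_valid[OF f mu])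
  let ?t = "Transposition.transpose r1 r2"
  have E: "\<forall>k. fst \<mu> (r1, k) = fst \<mu> (r2, k)" "\<forall>j. (r1, j) \<in> snd \<mu> \<longleftrightarrow> (r2, j) \<in> snd \<mu>"
    using r(4) by (simp_all add: content_eq_iff[OF v])
  have p: "?t permutes {1..n}" using r(1,2) Rw_valid[OF v] by (intro permutes_swap_id) auto
  have st: "mono_act ?t \<mu> = \<mu>" by (rule transp_stab[OF E])
  have fA: "finite (snd \<mu>)" using snd_valid[OF v] by (rule finite_subset) simp
  have sg: "act_sign ?t (snd \<mu>) = -1"
    by (rule transp_sign[OF r(3) E(2) _ fA]) (simp add: bA_bars o)
  have "f (mono_act ?t \<mu>) = act_sign ?t (snd \<mu>) * f \<mu>"
    using f p by (intro inv_value[OF inv_finite[OF f]]) (auto simp: invariants_def permutes_bij)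
  then have "f \<mu> = - f \<mu>" using st sg by simp
  then have "f \<mu> = 0" by simp
  then show False using mu by (simp add: supp_def)
qed

lemma uniq_odd:
  assumes f: "f \<in> invariants n m m'" and mu: "\<mu> \<in> supp f"
    and r: "r1 \<in> Rw \<mu>" "r2 \<in> Rw \<mu>" "r1 \<noteq> r2" "content m \<mu> r1 = content m \<mu> r2"
  shows "even (card (bars \<mu> r1))"
proof (rule ccontr)
  assume o: "odd (card (bars \<mu> r1))"
  have v: "valid_mono n m m' \<mu>" by (rule inv_valid[OF f mu])
  have "bars \<mu> r1 = bars \<mu> r2" using r(4) by (simp add: content_eq_iff[OF v] bars_def)
  then have o2: "odd (card (bars \<mu> r2))" using o by simp
  show False
  proof (cases "r1 < r2")
    case True then show False using uniq_core[OF f mu r(1,2) True r(4) o] by simp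
  next
    case False
    then have "r2 < r1" using r(3) by simp
    then show False using uniq_core[OF f mu r(2,1) _ r(4)[symmetric] o2] by simp
  qed
qed

lemma part_ok:
  assumes f: "f \<in> invariants n m m'" and mu: "\<mu> \<in> supp f"
  shows "super_mset_partition m m' (part m \<mu>)" "size (part m \<mu>) = rows \<mu>"
proof -
  have v: "valid_mono n m m' \<mu>" by (rule inv_valid[OF f mu])
  have fR: "finite (Rw \<mu>)" by (rule finite_Rw[OF v])
  show "size (part m \<mu>) = rows \<mu>" by (simp add: part_def rows_def)
  show "super_mset_partition m m' (part m \<mu>)"
    unfolding super_mset_partition_def
  proof
    fix S assume "S \<in># part m \<mu>"
    then obtain r where r: "r \<in> Rw \<mu>" "S = content m \<mu> r" using fR by (auto simp: part_def)
    have "count (part m \<mu>) S \<le> 1" if od: "odd (nbar S)"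
    proof -
      have "count (part m \<mu>) S = card {r' \<in> Rw \<mu>. content m \<mu> r' = S}"
        by (simp add: part_def count_image_mset_eq_card_vimage[OF fR])
      also have "\<dots> \<le> Suc 0"
      proof (subst card_le_Suc0_iff_eq)
        show "finite {r' \<in> Rw \<mu>. content m \<mu> r' = S}" using fR by simp
        show "\<forall>a1\<in>{r' \<in> Rw \<mu>. content m \<mu> r' = S}. \<forall>a2\<in>{r' \<in> Rw \<mu>. content m \<mu> r' = S}. a1 = a2"
        proof (intro ballI, rule ccontr)
          fix a1 a2 assume a: "a1 \<in> {r' \<in> Rw \<mu>. content m \<mu> r' = S}" "a2 \<in> {r' \<in> Rw \<mu>. content m \<mu> r' = S}" "a1 \<noteq> a2"
          then have "even (card (bars \<mu> a1))" using uniq_odd[OF f mu] by auto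
          moreover have "nbar S = card (bars \<mu> a1)" using a nbar_content[OF v] by auto
          ultimately show False using od by simp
        qed
      qed
      finally show ?thesis by simp
    qed
    then show "S \<noteq> {#} \<and> (\<forall>e\<in>#S. allowed_entry m m' e) \<and> (\<forall>j. count S (Bar j) \<le> 1)
              \<and> (odd (nbar S) \<longrightarrow> count (part m \<mu>) S \<le> 1)"
      using r content_nonempty[OF v] content_allowed[OF v] content_bar_le1[OF v] by auto
  qed
qed

lemma step:
  assumes ord: "\<forall>\<pi>. mset (ord \<pi>) = \<pi>" and f: "f \<in> invariants n m m'" and mu: "\<mu> \<in> supp f"
  shows "\<exists>p. p \<in> gens n m m' ord \<and> p \<mu> \<noteq> 0 \<and>
     (\<forall>\<nu>\<in>supp p. rows \<nu> \<le> rows \<mu> \<and> (rows \<nu> = rows \<mu> \<longrightarrow> (\<exists>\<sigma>. \<sigma> permutes {1..n} \<and> \<nu> = mono_act \<sigma> \<mu>)))"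
proof -
  have v: "valid_mono n m m' \<mu>" by (rule inv_valid[OF f mu])
  have fR: "finite (Rw \<mu>)" by (rule finite_Rw[OF v])
  define L where "L = ord (part m \<mu>)"
  have mL: "mset L = image_mset (content m \<mu>) (mset_set (Rw \<mu>))" using ord by (simp add: L_def part_def)
  obtain rs0 where rs0: "distinct rs0" "set rs0 = Rw \<mu>" "map (content m \<mu>) rs0 = L"
    using list_of_mset_image[OF fR mL] by blast
  have MM0: "MM L rs0 = \<mu>" using MM_content[OF v rs0(1,2)] rs0(3) by simp
  have len: "length rs0 = rows \<mu>" using distinct_card[OF rs0(1)] rs0(2) by (simp add: rows_def)
  have lenL: "length L = rows \<mu>" using len rs0(3) by auto
  have rs0R: "rs0 \<in> Rows n (length L)" using lenL len rs0(2) Rw_valid[OF v] by (simp add: Rows_def)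
  let ?R = "Rows n (length L)"
  have perm: "\<exists>\<sigma>. \<sigma> permutes {1..n} \<and> map \<sigma> rs0 = rs" if "rs \<in> ?R" "distinct rs" for rs
    using that rs0R by (intro perm_exists) (auto simp: Rows_def rs0(1))
  have uniq: "\<And>r1 r2. r1 \<in> Rw \<mu> \<Longrightarrow> r2 \<in> Rw \<mu> \<Longrightarrow> r1 \<noteq> r2 \<Longrightarrow> content m \<mu> r1 = content m \<mu> r2
               \<Longrightarrow> even (card (bars \<mu> r1))"
    using uniq_odd[OF f mu] by blast
  define p where "p = psum_list n L"
  have pg: "p \<in> gens n m m' ord"
    unfolding gens_def p_def L_def using part_ok[OF f mu] rows_le[OF v] by auto
  have plin: "p = lin ?R (MM L) (CC L)" by (simp add: p_def psum_list_lin)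
  have S4: "\<forall>\<nu>\<in>supp p. rows \<nu> \<le> rows \<mu> \<and> (rows \<nu> = rows \<mu> \<longrightarrow> (\<exists>\<sigma>. \<sigma> permutes {1..n} \<and> \<nu> = mono_act \<sigma> \<mu>))"
  proof
    fix \<nu> assume "\<nu> \<in> supp p"
    then obtain rs where rs: "rs \<in> ?R" "\<nu> = MM L rs" using supp_lin[of ?R "MM L" "CC L"] plin by blast
    have "rows \<nu> \<le> rows \<mu>" using rows_MM(1)[OF rs(1)] rs(2) lenL by simp
    moreover have "\<exists>\<sigma>. \<sigma> permutes {1..n} \<and> \<nu> = mono_act \<sigma> \<mu>" if "rows \<nu> = rows \<mu>"
    proof -
      have "distinct rs" using rows_MM(2)[OF rs(1)] that rs(2) lenL by simp
      then obtain \<sigma> where s: "\<sigma> permutes {1..n}" "map \<sigma> rs0 = rs" using perm[OF rs(1)] by blast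
      have "\<nu> = mono_act \<sigma> \<mu>"
        using MM_act[OF permutes_bij[OF s(1)], of L rs0] MM0 rs(2) s(2) lenL len by auto
      then show ?thesis using s(1) by blast
    qed
    ultimately show "rows \<nu> \<le> rows \<mu> \<and> (rows \<nu> = rows \<mu> \<longrightarrow> (\<exists>\<sigma>. \<sigma> permutes {1..n} \<and> \<nu> = mono_act \<sigma> \<mu>))"
      by blast
  qed
  have eqc: "CC L rs = CC L rs0" if h: "rs \<in> ?R" "MM L rs = \<mu>" for rs
  proof -
    have "distinct rs" using rows_MM(2)[OF h(1), of L] h(2) lenL by simp
    then obtain \<sigma> where s: "\<sigma> permutes {1..n}" "map \<sigma> rs0 = rs" using perm[OF h(1)] by blast
    have b: "bij \<sigma>" using s(1) by (rule permutes_bij)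
    have st: "mono_act \<sigma> \<mu> = \<mu>"
      using MM_act[OF b, of L rs0] MM0 h(2) s(2) lenL len by auto
    have "CC L rs = act_sign \<sigma> (snd (MM L rs0)) * CC L rs0"
      using CC_act[OF b, of L rs0] s(2) lenL len by auto
    also have "act_sign \<sigma> (snd (MM L rs0)) = 1"
      using stab_sign[OF v s(1) st uniq] MM0 by simp
    finally show ?thesis by simp
  qed
  have "p \<mu> = (\<Sum>rs\<in>?R. if MM L rs = \<mu> then CC L rs0 else 0)"
    unfolding plin lin_def using eqc by (intro sum.cong refl) auto
  also have "\<dots> = (\<Sum>rs\<in>{rs \<in> ?R. MM L rs = \<mu>}. CC L rs0)"
    by (rule sum.inter_filter[symmetric]) (simp add: finite_Rows)
  also have "\<dots> = of_nat (card {rs \<in> ?R. MM L rs = \<mu>}) * CC L rs0" by simp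
  finally have pmu: "p \<mu> = of_nat (card {rs \<in> ?R. MM L rs = \<mu>}) * CC L rs0" .
  have "card {rs \<in> ?R. MM L rs = \<mu>} \<noteq> 0"
    using rs0R MM0 finite_Rows[of n "length L"] by (auto simp: card_eq_0_iff)
  moreover have "CC L rs0 \<noteq> 0" using CC_nz[of L rs0] lenL len rs0(1) by simp
  ultimately have "p \<mu> \<noteq> 0" using pmu by simp
  then show ?thesis using pg S4 by blast
qed

lemma gens_inv: "\<forall>\<pi>. mset (ord \<pi>) = \<pi> \<Longrightarrow> gens n m m' ord \<subseteq> invariants n m m'"
  unfolding gens_def by (rule gens_invariant)

lemma reduce:
  assumes ord: "\<forall>\<pi>. mset (ord \<pi>) = \<pi>" and f: "f \<in> invariants n m m'"
    and rK: "\<forall>\<nu>\<in>supp f. rows \<nu> \<le> K" and mu: "\<mu> \<in> supp f" "rows \<mu> = K"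
  shows "\<exists>g c p. g \<in> invariants n m m' \<and> p \<in> gens n m m' ord \<and> f = (\<lambda>\<nu>. g \<nu> + c * p \<nu>)
     \<and> (\<forall>\<nu>\<in>supp g. rows \<nu> \<le> K) \<and> card {\<nu> \<in> supp g. rows \<nu> = K} < card {\<nu> \<in> supp f. rows \<nu> = K}"
proof -
  obtain p where pg: "p \<in> gens n m m' ord" and pmu: "p \<mu> \<noteq> 0"
    and S4: "\<forall>\<nu>\<in>supp p. rows \<nu> \<le> rows \<mu> \<and> (rows \<nu> = rows \<mu> \<longrightarrow> (\<exists>\<sigma>. \<sigma> permutes {1..n} \<and> \<nu> = mono_act \<sigma> \<mu>))"
    using step[OF ord f mu(1)] by blast
  have pinv: "p \<in> invariants n m m'" using pg gens_inv[OF ord] by blast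
  define c where "c = f \<mu> / p \<mu>"
  define g where "g = (\<lambda>\<nu>. f \<nu> + (- c) * p \<nu>)"
  have ginv: "g \<in> invariants n m m'" unfolding g_def by (rule invariants_add[OF f pinv])
  have feq: "f = (\<lambda>\<nu>. g \<nu> + c * p \<nu>)" by (simp add: g_def)
  have g0: "g \<mu> = 0" using pmu by (simp add: g_def c_def)
  have gz: "g (mono_act \<sigma> \<mu>) = 0" if "\<sigma> permutes {1..n}" for \<sigma>
  proof -
    have "g (mono_act \<sigma> \<mu>) = act_sign \<sigma> (snd \<mu>) * g \<mu>"
      using ginv that by (intro inv_value[OF inv_finite[OF ginv]]) (auto simp: invariants_def permutes_bij)
    then show ?thesis using g0 by simp
  qed
  have sg: "\<nu> \<in> supp f \<or> \<nu> \<in> supp p" if "\<nu> \<in> supp g" for \<nu>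
    using that by (auto simp: supp_def g_def)
  have rg: "\<forall>\<nu>\<in>supp g. rows \<nu> \<le> K"
    using sg rK S4 mu(2) by fastforce
  have sub: "{\<nu> \<in> supp g. rows \<nu> = K} \<subseteq> {\<nu> \<in> supp f. rows \<nu> = K} - {\<mu>}"
  proof
    fix \<nu> assume h: "\<nu> \<in> {\<nu> \<in> supp g. rows \<nu> = K}"
    then have "\<nu> \<noteq> \<mu>" using g0 by (auto simp: supp_def)
    moreover have "\<nu> \<in> supp f"
    proof (rule ccontr)
      assume "\<nu> \<notin> supp f"
      then have "\<nu> \<in> supp p" using sg h by blast
      then obtain \<sigma> where "\<sigma> permutes {1..n}" "\<nu> = mono_act \<sigma> \<mu>" using S4 h mu(2) by auto
      then have "g \<nu> = 0" using gz by simp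
      then show False using h by (simp add: supp_def)
    qed
    ultimately show "\<nu> \<in> {\<nu> \<in> supp f. rows \<nu> = K} - {\<mu>}" using h by simp
  qed
  have "card {\<nu> \<in> supp g. rows \<nu> = K} < card {\<nu> \<in> supp f. rows \<nu> = K}"
  proof (rule psubset_card_mono)
    show "finite {\<nu> \<in> supp f. rows \<nu> = K}" using inv_finite[OF f] by simp
    show "{\<nu> \<in> supp g. rows \<nu> = K} \<subset> {\<nu> \<in> supp f. rows \<nu> = K}" using sub mu by blast
  qed
  then show ?thesis using ginv pg feq rg by blast
qed

lemma inner:
  assumes ord: "\<forall>\<pi>. mset (ord \<pi>) = \<pi>"
    and outer: "\<And>g. g \<in> invariants n m m' \<Longrightarrow> (\<forall>\<mu>\<in>supp g. rows \<mu> < K) \<Longrightarrow> g \<in> cspan (gens n m m' ord)"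
  shows "f \<in> invariants n m m' \<Longrightarrow> (\<forall>\<mu>\<in>supp f. rows \<mu> \<le> K) \<Longrightarrow> card {\<mu> \<in> supp f. rows \<mu> = K} \<le> N
         \<Longrightarrow> f \<in> cspan (gens n m m' ord)"
proof (induction N arbitrary: f rule: less_induct)
  case (less N)
  show ?case
  proof (cases "card {\<mu> \<in> supp f. rows \<mu> = K} = 0")
    case True
    then have "{\<mu> \<in> supp f. rows \<mu> = K} = {}" using inv_finite[OF less.prems(1)] by simp
    then have "\<forall>\<mu>\<in>supp f. rows \<mu> < K" using less.prems(2) by fastforce
    then show ?thesis by (rule outer[OF less.prems(1)])
  next
    case False
    then obtain \<mu> where mu: "\<mu> \<in> supp f" "rows \<mu> = K" by (metis (mono_tags, lifting) Collect_empty_eq card.empty)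
    obtain g c p where r: "g \<in> invariants n m m'" "p \<in> gens n m m' ord" "f = (\<lambda>\<nu>. g \<nu> + c * p \<nu>)"
      "\<forall>\<nu>\<in>supp g. rows \<nu> \<le> K" "card {\<nu> \<in> supp g. rows \<nu> = K} < card {\<nu> \<in> supp f. rows \<nu> = K}"
      using reduce[OF ord less.prems(1,2) mu] by blast
    have "g \<in> cspan (gens n m m' ord)"
      using less.IH[of "card {\<nu> \<in> supp g. rows \<nu> = K}" g] r less.prems(3) by simp
    then show ?thesis using r(2,3) cspan_add by simp
  qed
qed

lemma outer:
  assumes ord: "\<forall>\<pi>. mset (ord \<pi>) = \<pi>"
  shows "\<forall>f. f \<in> invariants n m m' \<longrightarrow> (\<forall>\<mu>\<in>supp f. rows \<mu> < K) \<longrightarrow> f \<in> cspan (gens n m m' ord)"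
proof (induction K)
  case 0
  show ?case
  proof (intro allI impI)
    fix f assume "f \<in> invariants n m m'" "\<forall>\<mu>\<in>supp f. rows \<mu> < 0"
    then have "f = (\<lambda>_. 0)" by (auto simp: supp_def fun_eq_iff)
    then show "f \<in> cspan (gens n m m' ord)" using cspan_zero by simp
  qed
next
  case (Suc K)
  show ?case
  proof (intro allI impI)
    fix f assume f: "f \<in> invariants n m m'" "\<forall>\<mu>\<in>supp f. rows \<mu> < Suc K"
    show "f \<in> cspan (gens n m m' ord)"
      by (rule inner[OF ord _ f(1), of K "card {\<mu> \<in> supp f. rows \<mu> = K}"]) (use Suc f(2) in auto)
  qed
qed

theorem main_eq:
  assumes "\<forall>\<pi>. mset (ord \<pi>) = \<pi>"
  shows "cspan {psum_list n (ord \<pi>) | \<pi>. super_mset_partition m m' \<pi> \<and> size \<pi> \<le> n}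
           = invariants n m m'"
proof
  show "cspan {psum_list n (ord \<pi>) | \<pi>. super_mset_partition m m' \<pi> \<and> size \<pi> \<le> n} \<subseteq> invariants n m m'"
    by (rule cspan_invariant[OF gens_invariant[OF assms]])
  show "invariants n m m' \<subseteq> cspan {psum_list n (ord \<pi>) | \<pi>. super_mset_partition m m' \<pi> \<and> size \<pi> \<le> n}"
  proof
    fix f assume f: "f \<in> invariants n m m'"
    have "\<forall>\<mu>\<in>supp f. rows \<mu> < Suc n"
    proof
      fix \<mu> assume "\<mu> \<in> supp f"
      then have "rows \<mu> \<le> n" by (rule rows_le[OF inv_valid[OF f]])
      then show "rows \<mu> < Suc n" by simp
    qed
    then have "f \<in> cspan (gens n m m' ord)" using outer[OF assms, of n m m' "Suc n"] f by blast
    then show "f \<in> cspan {psum_list n (ord \<pi>) | \<pi>. super_mset_partition m m' \<pi> \<and> size \<pi> \<le> n}"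
      by (simp add: gens_def)
  qed
qed

theorem lemma4p2:
  fixes n m m' :: nat
    and ord :: "entry multiset multiset \<Rightarrow> entry multiset list"
  assumes "n \<ge> 1"
    and "\<forall>\<pi>. mset (ord \<pi>) = \<pi>"
  shows "cspan {psum_list n (ord \<pi>) | \<pi>. super_mset_partition m m' \<pi> \<and> size \<pi> \<le> n}
           = invariants n m m'"
  by (rule main_eq[OF assms(2)])

end
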